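(* Let $n\ge 2$ and let $\mathcal{C}\subseteq\{0,1\}^{n\times n}$ be a code. Then $\mathcal{C}$ is a $(1,1)$-criss-cross deletion correcting code if and only if it is a $(1,1)$-criss-cross insertion correcting code.
   Context: For a binary array $\mathbf{X}$, $\mathbb{D}_{t_r,t_c}(\mathbf{X})$ denotes the set of all arrays obtained from $\mathbf{X}$ by deleting any $t_r$ rows and any $t_c$ columns, and $\mathbb{I}_{t_r,t_c}(\mathbf{X})$ the set of all binary arrays obtained from $\mathbf{X}$ by inserting $t_r$ rows and $t_c$ columns (with arbitrary binary content, at arbitrary positions). A code $\mathcal{C}\subseteq\{0,1\}^{n\times n}$ is a $(t_r,t_c)$-criss-cross deletion correcting code if it can correct any deletion of $t_r$ rows and $t_c$ columns, i.e. $\mathbb{D}_{t_r,t_c}(\mathbf{X})\cap\mathbb{D}_{t_r,t_c}(\mathbf{Y})=\emptyset$ for all distinct $\mathbf{X},\mathbf{Y}\in\mathcal{C}$; a $(t_r,t_c)$-criss-cross insertion correcting code is defined analogously with $\mathbb{I}_{t_r,t_c}$. *)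

theory Defs
  imports Main
begin

text \<open>Binary arrays are represented as lists of rows; each row is a list of booleans.
  An m x k array is a list of m rows each of length k.\<close>

definition is_array :: "nat \<Rightarrow> nat \<Rightarrow> bool list list \<Rightarrow> bool" where
  "is_array m k X \<longleftrightarrow> length X = m \<and> (\<forall>r \<in> set X. length r = k)"

definition keep :: "nat set \<Rightarrow> 'a list \<Rightarrow> 'a list" where
  "keep S xs = nths xs S"

definition del_ball :: "nat \<Rightarrow> nat \<Rightarrow> bool list list \<Rightarrow> bool list list set" where
  "del_ball tr tc X =
     {map (keep (- C)) (keep (- R) X) | R C.
        R \<subseteq> {..<length X} \<and> card R = tr \<and>
        C \<subseteq> {..<length (hd X)} \<and> card C = tc}"

definition ins_ball :: "nat \<Rightarrow> nat \<Rightarrow> nat \<Rightarrow> nat \<Rightarrow> bool list list \<Rightarrow> bool list list set" where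
  "ins_ball m k tr tc X =
     {Y. is_array (m + tr) (k + tc) Y \<and> X \<in> del_ball tr tc Y}"

definition criss_cross_del_code :: "nat \<Rightarrow> nat \<Rightarrow> nat \<Rightarrow> bool list list set \<Rightarrow> bool" where
  "criss_cross_del_code n tr tc Cd \<longleftrightarrow>
     (\<forall>X\<in>Cd. \<forall>Y\<in>Cd. X \<noteq> Y \<longrightarrow> del_ball tr tc X \<inter> del_ball tr tc Y = {})"

definition criss_cross_ins_code :: "nat \<Rightarrow> nat \<Rightarrow> nat \<Rightarrow> bool list list set \<Rightarrow> bool" where
  "criss_cross_ins_code n tr tc Cd \<longleftrightarrow>
     (\<forall>X\<in>Cd. \<forall>Y\<in>Cd. X \<noteq> Y \<longrightarrow> ins_ball n n tr tc X \<inter> ins_ball n n tr tc Y = {})"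

end

theory Submission imports Defs begin

definition sk :: "nat \<Rightarrow> nat \<Rightarrow> nat" where "sk i a = (if a < i then a else Suc a)"
definition unsk :: "nat \<Rightarrow> nat \<Rightarrow> nat" where "unsk i a = (if a < i then a else a - 1)"
definition tab :: "nat \<Rightarrow> nat \<Rightarrow> (nat \<Rightarrow> nat \<Rightarrow> 'a) \<Rightarrow> 'a list list" where
  "tab m k f = map (\<lambda>a. map (\<lambda>b. f a b) [0..<k]) [0..<m]"
definition dl :: "nat \<Rightarrow> nat \<Rightarrow> nat \<Rightarrow> nat \<Rightarrow> 'a list list \<Rightarrow> 'a list list" where
  "dl m k i j X = tab (m-1) (k-1) (\<lambda>a b. X!(sk i a)!(sk j b))"

lemma tab_nth: "a < m \<Longrightarrow> b < k \<Longrightarrow> tab m k f ! a ! b = f a b"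
  by (simp add: tab_def)

lemma tab_arr: "is_array m k (tab m k f)"
  by (auto simp: tab_def is_array_def)

lemma tab_inj: "tab m k f = tab m k g \<Longrightarrow> a < m \<Longrightarrow> b < k \<Longrightarrow> f a b = g a b"
  by (metis tab_nth)

lemma tab_self: "is_array m k X \<Longrightarrow> tab m k (\<lambda>a b. X!a!b) = X"
  unfolding tab_def is_array_def
  by (rule nth_equalityI) (auto intro!: nth_equalityI)

lemma tab_cong: "(\<And>a b. a < m \<Longrightarrow> b < k \<Longrightarrow> f a b = g a b) \<Longrightarrow> tab m k f = tab m k g"
  by (auto simp: tab_def)

lemma sk_lt: "a < n - 1 \<Longrightarrow> i < n \<Longrightarrow> sk i a < n"
  by (auto simp: sk_def)

lemma nths_del1: "i < length xs \<Longrightarrow> nths xs (-{i}) = map (\<lambda>a. xs!(sk i a)) [0..<length xs - 1]"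
proof -
  assume i: "i < length xs"
  have xs: "xs = take i xs @ xs!i # drop (Suc i) xs" using i by (simp add: id_take_nth_drop)
  have "nths xs (-{i}) = nths (take i xs) (-{i}) @ nths (xs!i # drop (Suc i) xs) {j. j + length (take i xs) \<in> -{i}}"
    by (subst xs, rule nths_append)
  also have "nths (take i xs) (-{i}) = take i xs"
    by (rule nths_all) (use i in auto)
  also have "nths (xs!i # drop (Suc i) xs) {j. j + length (take i xs) \<in> -{i}} = drop (Suc i) xs"
    using i by (simp add: nths_Cons, intro nths_all, auto)
  finally have "nths xs (-{i}) = take i xs @ drop (Suc i) xs" .
  also have "\<dots> = map (\<lambda>a. xs!(sk i a)) [0..<length xs - 1]"
    using i by (intro nth_equalityI) (auto simp: nth_append sk_def min_def)
  finally show ?thesis .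
qed

lemma del_ball_eq:
  assumes "is_array m k X" "m \<ge> 1" "k \<ge> 1"
  shows "del_ball 1 1 X = {dl m k i j X | i j. i < m \<and> j < k}"
proof -
  have lx: "length X = m" and lr: "\<And>r. r \<in> set X \<Longrightarrow> length r = k" using assms by (auto simp: is_array_def)
  have hd: "length (hd X) = k" using lx lr assms(2) by (cases X) auto
  have key: "map (keep (-{j})) (keep (-{i}) X) = dl m k i j X" if "i < m" "j < k" for i j
  proof -
    have "map (keep (-{j})) (keep (-{i}) X) = map (\<lambda>r. map (\<lambda>b. r!(sk j b)) [0..<k-1]) (map (\<lambda>a. X!(sk i a)) [0..<m-1])"
    proof -
      have "keep (-{i}) X = map (\<lambda>a. X!(sk i a)) [0..<m-1]"
        unfolding keep_def using that lx by (simp add: nths_del1)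
      moreover have "keep (-{j}) r = map (\<lambda>b. r!(sk j b)) [0..<k-1]" if "r \<in> set X" for r
        unfolding keep_def using that lr[OF that] \<open>j < k\<close> by (simp add: nths_del1)
      moreover have "X!(sk i a) \<in> set X" if "a < m - 1" for a
        using sk_lt[OF that \<open>i<m\<close>] lx by simp
      ultimately show ?thesis by auto
    qed
    then show ?thesis by (simp add: dl_def tab_def)
  qed
  show ?thesis
    unfolding del_ball_def lx hd
    apply (auto simp: card_1_singleton_iff)
    using key apply blast
    using key by (metis lessThan_iff singletonD subsetI)
qed


lemma dl_dl: "i < n \<Longrightarrow> j < n \<Longrightarrow>
  dl n n i j (dl (n+1) (n+1) p q W) = tab (n-1) (n-1) (\<lambda>a b. W!(sk p (sk i a))!(sk q (sk j b)))"
  unfolding dl_def[of n n]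
  by (rule tab_cong) (simp add: dl_def tab_nth sk_lt)

lemma idxB: "p1 \<le> n \<Longrightarrow> p2 \<le> n \<Longrightarrow> n \<ge> 1 \<Longrightarrow>
  \<exists>i1 i2. i1 < n \<and> i2 < n \<and> (\<forall>a. sk p1 (sk i1 a) = sk p2 (sk i2 a))"
proof -
  assume a: "p1 \<le> n" "p2 \<le> n" "n \<ge> 1"
  consider "p1 < p2" | "p1 = p2" | "p2 < p1" by arith
  then show ?thesis
  proof cases
    case 1 then show ?thesis using a by (intro exI[of _ "p2 - 1"] exI[of _ p1]) (auto simp: sk_def)
  next
    case 2 then show ?thesis using a by (intro exI[of _ 0] exI[of _ 0]) auto
  next
    case 3 then show ?thesis using a by (intro exI[of _ p2] exI[of _ "p1 - 1"]) (auto simp: sk_def)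
  qed
qed

lemma idxA: "i1 < n \<Longrightarrow> i2 < n \<Longrightarrow>
  \<exists>p1 p2. p1 \<le> n \<and> p2 \<le> n \<and> (\<forall>a. sk p2 (sk i1 a) = sk p1 (sk i2 a)) \<and> sk p1 i2 = p2"
proof -
  assume a: "i1 < n" "i2 < n"
  show ?thesis
  proof (cases "i1 \<le> i2")
    case True then show ?thesis using a by (intro exI[of _ i1] exI[of _ "Suc i2"]) (auto simp: sk_def)
  next
    case False then show ?thesis using a by (intro exI[of _ "Suc i1"] exI[of _ i2]) (auto simp: sk_def)
  qed
qed

lemma ins_mem: "n \<ge> 1 \<Longrightarrow> W \<in> ins_ball n n 1 1 X \<longleftrightarrow>
   is_array (n+1) (n+1) W \<and> (\<exists>p q. p \<le> n \<and> q \<le> n \<and> X = dl (n+1) (n+1) p q W)"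
proof -
  assume n: "n \<ge> 1"
  have "is_array (n+1) (n+1) W \<Longrightarrow> X \<in> del_ball 1 1 W \<longleftrightarrow> (\<exists>p q. p \<le> n \<and> q \<le> n \<and> X = dl (n+1) (n+1) p q W)"
    using del_ball_eq[of "n+1" "n+1" W] by (auto simp: less_Suc_eq_le)
  then show ?thesis unfolding ins_ball_def by auto
qed

lemma pair:
  assumes X: "is_array n n X" and Y: "is_array n n Y" and n: "n \<ge> 2"
  shows "(del_ball 1 1 X \<inter> del_ball 1 1 Y \<noteq> {}) = (ins_ball n n 1 1 X \<inter> ins_ball n n 1 1 Y \<noteq> {})"
proof
  assume "del_ball 1 1 X \<inter> del_ball 1 1 Y \<noteq> {}"
  then obtain i1 j1 i2 j2 where ij: "i1 < n" "j1 < n" "i2 < n" "j2 < n"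
    and eq: "dl n n i1 j1 X = dl n n i2 j2 Y"
    using del_ball_eq[OF X] del_ball_eq[OF Y] n by fastforce
  have eqp: "X!(sk i1 a)!(sk j1 b) = Y!(sk i2 a)!(sk j2 b)" if "a < n - 1" "b < n - 1" for a b
    using tab_inj[OF eq[unfolded dl_def] that] .
  obtain p1 p2 where p: "p1 \<le> n" "p2 \<le> n" "\<forall>a. sk p2 (sk i1 a) = sk p1 (sk i2 a)" "sk p1 i2 = p2"
    using idxA[OF ij(1,3)] by blast
  obtain q1 q2 where q: "q1 \<le> n" "q2 \<le> n" "\<forall>a. sk q2 (sk j1 a) = sk q1 (sk j2 a)" "sk q1 j2 = q2"
    using idxA[OF ij(2,4)] by blast
  define W where "W = tab (n+1) (n+1) (\<lambda>u v. if u \<noteq> p2 \<and> v \<noteq> q2 then X!(unsk p2 u)!(unsk q2 v)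
     else Y!(unsk p1 u)!(unsk q1 v))"
  have W: "is_array (n+1) (n+1) W" unfolding W_def by (rule tab_arr)
  have "X = tab n n (\<lambda>a b. X!a!b)" using tab_self[OF X] by simp
  also have "\<dots> = dl (n+1) (n+1) p2 q2 W"
    unfolding dl_def add_diff_cancel_right'
  proof (rule tab_cong)
    fix a b assume ab: "a < n" "b < n"
    have sa: "sk p2 a < n + 1" "sk q2 b < n+1" "sk p2 a \<noteq> p2" "sk q2 b \<noteq> q2"
      "unsk p2 (sk p2 a) = a" "unsk q2 (sk q2 b) = b" using ab by (auto simp: sk_def unsk_def)
    show "X!a!b = W!(sk p2 a)!(sk q2 b)" unfolding W_def using sa by (simp add: tab_nth)
  qed
  finally have WX: "W \<in> ins_ball n n 1 1 X" using ins_mem[of n W X] n W p q by auto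
  have "Y = tab n n (\<lambda>a b. Y!a!b)" using tab_self[OF Y] by simp
  also have "\<dots> = dl (n+1) (n+1) p1 q1 W"
    unfolding dl_def add_diff_cancel_right'
  proof (rule tab_cong)
    fix a b assume ab: "a < n" "b < n"
    have sa: "sk p1 a < n + 1" "sk q1 b < n+1" using ab by (auto simp: sk_def)
    show "Y!a!b = W!(sk p1 a)!(sk q1 b)"
    proof (cases "sk p1 a \<noteq> p2 \<and> sk q1 b \<noteq> q2")
      case True
      then have "a \<noteq> i2" "b \<noteq> j2" using p q by auto
      define a' where "a' = unsk i2 a"
      define b' where "b' = unsk j2 b"
      have a': "a = sk i2 a'" "a' < n - 1" using \<open>a \<noteq> i2\<close> ab ij by (auto simp: a'_def sk_def unsk_def)
      have b': "b = sk j2 b'" "b' < n - 1" using \<open>b \<noteq> j2\<close> ab ij by (auto simp: b'_def sk_def unsk_def)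
      have "W!(sk p1 a)!(sk q1 b) = X!(unsk p2 (sk p1 a))!(unsk q2 (sk q1 b))"
        unfolding W_def using True sa by (simp add: tab_nth)
      also have "unsk p2 (sk p1 a) = sk i1 a'" using p(3) a' by (metis sk_def unsk_def Suc_diff_1 diff_Suc_1 less_Suc_eq not_less_eq)
      also have "unsk q2 (sk q1 b) = sk j1 b'" using q(3) b' by (metis sk_def unsk_def Suc_diff_1 diff_Suc_1 less_Suc_eq not_less_eq)
      finally show ?thesis using eqp[OF a'(2) b'(2)] a'(1) b'(1) by simp
    next
      case False
      then show ?thesis unfolding W_def using sa by (auto simp: tab_nth sk_def unsk_def)
    qed
  qed
  finally have WY: "W \<in> ins_ball n n 1 1 Y" using ins_mem[of n W Y] n W p q by auto
  from WX WY show "ins_ball n n 1 1 X \<inter> ins_ball n n 1 1 Y \<noteq> {}" by blast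
next
  assume "ins_ball n n 1 1 X \<inter> ins_ball n n 1 1 Y \<noteq> {}"
  then obtain W p1 q1 p2 q2 where W: "is_array (n+1) (n+1) W" and pq: "p1 \<le> n" "q1 \<le> n" "p2 \<le> n" "q2 \<le> n"
    and WX: "X = dl (n+1) (n+1) p1 q1 W" and WY: "Y = dl (n+1) (n+1) p2 q2 W"
  proof -
    from \<open>ins_ball n n 1 1 X \<inter> ins_ball n n 1 1 Y \<noteq> {}\<close> obtain W where
      "W \<in> ins_ball n n 1 1 X" "W \<in> ins_ball n n 1 1 Y" by blast
    moreover have "n \<ge> 1" using n by simp
    ultimately show ?thesis using that ins_mem[of n W X] ins_mem[of n W Y] by metis
  qed
  obtain i1 i2 where i: "i1 < n" "i2 < n" "\<forall>a. sk p1 (sk i1 a) = sk p2 (sk i2 a)"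
    using idxB[OF pq(1,3)] n by auto
  obtain j1 j2 where j: "j1 < n" "j2 < n" "\<forall>a. sk q1 (sk j1 a) = sk q2 (sk j2 a)"
    using idxB[OF pq(2,4)] n by auto
  have "dl n n i1 j1 X = dl n n i2 j2 Y"
    unfolding WX WY using i j by (simp only: dl_dl)
  moreover have "dl n n i1 j1 X \<in> del_ball 1 1 X" using del_ball_eq[OF X] n i j by auto
  moreover have "dl n n i2 j2 Y \<in> del_ball 1 1 Y" using del_ball_eq[OF Y] n i j by auto
  ultimately show "del_ball 1 1 X \<inter> del_ball 1 1 Y \<noteq> {}" by auto
qed

theorem theorem1:
  fixes n :: nat and Cd :: "bool list list set"
  assumes "n \<ge> 2"
    and "\<forall>X\<in>Cd. is_array n n X"
  shows "criss_cross_del_code n 1 1 Cd \<longleftrightarrow> criss_cross_ins_code n 1 1 Cd"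
  unfolding criss_cross_del_code_def criss_cross_ins_code_def
  using pair assms by metis

end
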